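(* Let $\Gamma$ be the integer Heisenberg group, elements written $(a,b,c)$. Let $\{q_1,q_2,\dots\}$ be an infinite set of distinct primes, and for $\ell\ge1$ put $M_\ell=q_1q_2\cdots q_\ell$ and $N_\ell=q_1^2q_2^2\cdots q_\ell^2$, and $\Gamma_\ell=\{(aM_\ell,bN_\ell,cN_\ell):a,b,c\in\mathbb{Z}\}$. Then $\Gamma_\ell$ is a descending chain of finite-index subgroups, and the associated Cantor action $(X_\infty,\Gamma,\Phi)$, where $X_\infty=\varprojlim\Gamma/\Gamma_\ell$ with $\Gamma$ acting by left translation on each coset space, is topologically free and wild, and its prime spectrum is $\{q_1,q_2,\dots\}$ (each $q_i$ with finite multiplicity).
   Context: The integer Heisenberg group consists of the matrices $\begin{pmatrix}1&a&c\\0&1&b\\0&0&1\end{pmatrix}$, $a,b,c\in\mathbb{Z}$, denoted $(a,b,c)$, with product $(a,b,c)(a',b',c')=(a+a',b+b',c+c'+ab')$. For a descending chain of finite-index subgroups $\Gamma_\ell$, $X_\infty=\varprojlim\{\Gamma/\Gamma_{\ell+1}\to\Gamma/\Gamma_\ell\}$ is a Cantor space (Tychonoff topology) on which $\Gamma$ acts minimally and equicontinuously. The Steinitz order of this action is the supernatural number $\mathrm{lcm}\{[\Gamma:\Gamma_\ell]\}=\prod_p p^{\chi(p)}$, and its prime spectrum is $\{p:\chi(p)>0\}$. Topologically free: no nontrivial $\Phi(g)$ restricts to the identity on a nonempty open set. Locally quasi-analytic: there is $\varepsilon>0$ such that for every nonempty open $U$ of diameter $<\varepsilon$, nonempty open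 $V\subset U$ and group elements $g_1,g_2$, agreement of $g_1,g_2$ on $V$ implies agreement on $U$. With $\mathfrak{G}(\Phi)$ the closure of $\Phi(\Gamma)$ in $\mathrm{Homeo}(X_\infty)$ (uniform topology), the action is wild if the action of $\mathfrak{G}(\Phi)$ on $X_\infty$ is not locally quasi-analytic. *)

theory Defs
  imports "HOL-Algebra.Coset" "HOL-Analysis.Analysis" "HOL-Computational_Algebra.Primes"
begin

type_synonym heis = "int \<times> int \<times> int"

fun hmult :: "heis \<Rightarrow> heis \<Rightarrow> heis" where
  "hmult (a, b, c) (a', b', c') = (a + a', b + b', c + c' + a * b')"

definition heisG :: "heis monoid" where
  "heisG = \<lparr>carrier = UNIV, monoid.mult = hmult, one = (0, 0, 0)\<rparr>"

section \<open>The chain of subgroups (index k corresponds to the paper's \<ell> = k + 1)\<close>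

definition Mq :: "(nat \<Rightarrow> nat) \<Rightarrow> nat \<Rightarrow> int" where
  "Mq q k = (\<Prod>i\<le>k. int (q i))"

definition Nq :: "(nat \<Rightarrow> nat) \<Rightarrow> nat \<Rightarrow> int" where
  "Nq q k = (\<Prod>i\<le>k. int (q i) ^ 2)"

definition Gam :: "(nat \<Rightarrow> nat) \<Rightarrow> nat \<Rightarrow> heis set" where
  "Gam q k = {(a * Mq q k, b * Nq q k, c * Nq q k) | a b c. True}"

definition cosets :: "(nat \<Rightarrow> nat) \<Rightarrow> nat \<Rightarrow> heis set set" where
  "cosets q k = {l_coset heisG g (Gam q k) | g. g \<in> carrier heisG}"

definition idx :: "(nat \<Rightarrow> nat) \<Rightarrow> nat \<Rightarrow> nat" where
  "idx q k = card (cosets q k)"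

text \<open>Points of the inverse limit: compatible sequences of cosets; the bonding
  map Gamma/Gamma_{k+1} -> Gamma/Gamma_k sends g Gamma_{k+1} to g Gamma_k, i.e.
  compatibility is containment.\<close>
definition Xinf :: "(nat \<Rightarrow> nat) \<Rightarrow> (nat \<Rightarrow> heis set) set" where
  "Xinf q = {x. (\<forall>k. x k \<in> cosets q k) \<and> (\<forall>k. x (Suc k) \<subseteq> x k)}"

definition Xtop :: "(nat \<Rightarrow> nat) \<Rightarrow> (nat \<Rightarrow> heis set) topology" where
  "Xtop q = subtopology (product_topology (\<lambda>k. discrete_topology (cosets q k)) UNIV) (Xinf q)"

definition xdist :: "(nat \<Rightarrow> heis set) \<Rightarrow> (nat \<Rightarrow> heis set) \<Rightarrow> real" where
  "xdist x y = (if x = y then 0 else (1/2) ^ (LEAST k. x k \<noteq> y k))"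

definition xdiam :: "(nat \<Rightarrow> heis set) set \<Rightarrow> real" where
  "xdiam U = Sup {xdist x y | x y. x \<in> U \<and> y \<in> U}"

definition Phi :: "heis \<Rightarrow> (nat \<Rightarrow> heis set) \<Rightarrow> (nat \<Rightarrow> heis set)" where
  "Phi g x = (\<lambda>k. l_coset heisG g (x k))"

definition topologically_free :: "'a topology \<Rightarrow> ('a \<Rightarrow> 'a) set \<Rightarrow> bool" where
  "topologically_free T A \<longleftrightarrow>
     (\<forall>f\<in>A. (\<exists>x\<in>topspace T. f x \<noteq> x) \<longrightarrow>
        \<not> (\<exists>U. openin T U \<and> U \<noteq> {} \<and> (\<forall>x\<in>U. f x = x)))"

definition locally_quasi_analytic ::
    "'a topology \<Rightarrow> ('a set \<Rightarrow> real) \<Rightarrow> ('a \<Rightarrow> 'a) set \<Rightarrow> bool" where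
  "locally_quasi_analytic T diam A \<longleftrightarrow>
     (\<exists>\<epsilon>>0. \<forall>U V. openin T U \<and> U \<noteq> {} \<and> diam U < \<epsilon> \<and> openin T V \<and> V \<noteq> {} \<and> V \<subseteq> U \<longrightarrow>
        (\<forall>g1\<in>A. \<forall>g2\<in>A. (\<forall>x\<in>V. g1 x = g2 x) \<longrightarrow> (\<forall>x\<in>U. g1 x = g2 x)))"

text \<open>Closure of Phi(Gamma) in Homeo(Xinf) with the uniform topology (sup metric).\<close>
definition enveloping :: "(nat \<Rightarrow> nat) \<Rightarrow> ((nat \<Rightarrow> heis set) \<Rightarrow> (nat \<Rightarrow> heis set)) set" where
  "enveloping q = {f. homeomorphic_map (Xtop q) (Xtop q) f \<and>
      (\<forall>\<epsilon>>0. \<exists>g. \<forall>x\<in>Xinf q. xdist (f x) (Phi g x) < \<epsilon>)}"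

definition wild :: "(nat \<Rightarrow> nat) \<Rightarrow> bool" where
  "wild q \<longleftrightarrow> \<not> locally_quasi_analytic (Xtop q) xdiam (enveloping q)"

definition steinitz_chi :: "(nat \<Rightarrow> nat) \<Rightarrow> nat \<Rightarrow> enat" where
  "steinitz_chi q p = (SUP k. enat (multiplicity p (idx q k)))"

definition prime_spectrum :: "(nat \<Rightarrow> nat) \<Rightarrow> nat set" where
  "prime_spectrum q = {p. prime p \<and> steinitz_chi q p > 0}"

end

theory Submission
  imports Defs "HOL-Number_Theory.Residues"
begin


lemma hmult_assoc: "hmult (hmult x y) z = hmult x (hmult y z)"
  by (cases x; cases y; cases z) (simp add: algebra_simps)

lemma hmult_one[simp]: "hmult (0,0,0) x = x" by (cases x) simp

fun hinv :: "heis \<Rightarrow> heis" where "hinv (a,b,c) = (-a,-b,a*b-c)"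

lemma hmult_hinv1[simp]: "hmult g (hmult (hinv g) w) = w"
  by (cases g; cases w) (simp add: algebra_simps)
lemma hmult_hinv2[simp]: "hmult (hinv g) (hmult g w) = w"
  by (cases g; cases w) (simp add: algebra_simps)

lemma heis_group: "group heisG"
  apply (rule groupI)
  apply (simp_all add: heisG_def hmult_assoc)
  subgoal for x apply (cases x) apply (rename_tac a b c)
    apply (rule_tac x="-a" in exI, rule_tac x="-b" in exI, rule_tac x="a*b-c" in exI) by simp
  done

lemma heis_inv: "inv\<^bsub>heisG\<^esub> (a,b,c) = (-a,-b,a*b-c)"
  by (rule group.inv_equality[OF heis_group]) (auto simp: heisG_def)

lemma lcos_image: "l_coset heisG g S = hmult g ` S"
  by (auto simp: l_coset_def heisG_def)

fun rel :: "(nat \<Rightarrow> nat) \<Rightarrow> nat \<Rightarrow> heis \<Rightarrow> heis \<Rightarrow> bool" where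
 "rel q k (x,y,z) (x',y',z') = (Mq q k dvd x' - x \<and> Nq q k dvd y' - y \<and> Nq q k dvd z' - z - x*(y'-y))"

definition cs where "cs q k h = l_coset heisG h (Gam q k)"

lemma Gam_mem: "(x,y,z) \<in> Gam q k \<longleftrightarrow> Mq q k dvd x \<and> Nq q k dvd y \<and> Nq q k dvd z"
  unfolding Gam_def by (auto simp: dvd_def mult.commute)

lemma Mq_Suc: "Mq q (Suc k) = Mq q k * int (q (Suc k))"
  by (simp add: Mq_def)

lemma Nq_eq: "Nq q k = Mq q k ^ 2"
  by (simp add: Nq_def Mq_def prod_power_distrib)

lemma Mq_dvd: "j \<le> k \<Longrightarrow> Mq q j dvd Mq q k"
  unfolding Mq_def by (rule prod_dvd_prod_subset) auto

lemma Nq_dvd: "j \<le> k \<Longrightarrow> Nq q j dvd Nq q k"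
  by (simp add: Nq_eq Mq_dvd)

lemma Mq_dvd_Nq: "Mq q k dvd Nq q k"
  by (simp add: Nq_eq power2_eq_square)

lemma cs_char: "w \<in> cs q k h \<longleftrightarrow> rel q k h w"
proof -
  obtain x y z where h: "h = (x,y,z)" by (cases h) auto
  obtain x' y' z' where w: "w = (x',y',z')" by (cases w) auto
  show ?thesis
  proof
    assume "w \<in> cs q k h"
    then obtain a b c where g: "(a,b,c) \<in> Gam q k" and e: "w = hmult h (a,b,c)"
      by (auto simp: cs_def l_coset_def heisG_def)
    then show "rel q k h w" using g by (auto simp: h w Gam_mem)
  next
    assume r: "rel q k h w"
    have "(x'-x, y'-y, z'-z-x*(y'-y)) \<in> Gam q k" using r by (simp add: h w Gam_mem)
    moreover have "w = hmult h (x'-x, y'-y, z'-z-x*(y'-y))" by (simp add: h w algebra_simps)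
    ultimately show "w \<in> cs q k h" by (auto simp: cs_def l_coset_def heisG_def)
  qed
qed

lemma rel_refl: "rel q k h h"
  by (cases h) auto

lemma rel_sym: "rel q k h w \<Longrightarrow> rel q k w h"
proof -
  obtain x y z where h: "h = (x,y,z)" by (cases h) auto
  obtain x' y' z' where w: "w = (x',y',z')" by (cases w) auto
  assume r: "rel q k h w"
  have e: "z - z' - x'*(y-y') = (x'-x)*(y'-y) - (z'-z-x*(y'-y))" by (simp add: algebra_simps)
  have "Nq q k dvd (x'-x)*(y'-y)" using r by (simp add: h w)
  then show ?thesis using r unfolding h w
    by (simp only: rel.simps e) (metis dvd_diff dvd_minus_iff minus_diff_eq)
qed

lemma rel_trans: "rel q k h w \<Longrightarrow> rel q k w v \<Longrightarrow> rel q k h v"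
proof -
  obtain x y z where h: "h = (x,y,z)" by (cases h) auto
  obtain x' y' z' where w: "w = (x',y',z')" by (cases w) auto
  obtain x'' y'' z'' where v: "v = (x'',y'',z'')" by (cases v) auto
  assume r1: "rel q k h w" and r2: "rel q k w v"
  have e1: "x''-x = (x''-x') + (x'-x)" and e2: "y''-y = (y''-y') + (y'-y)" by simp_all
  have e3: "z''-z-x*(y''-y) = (z''-z'-x'*(y''-y')) + (z'-z-x*(y'-y)) + (x'-x)*(y''-y')"
    by (simp add: algebra_simps)
  have "Nq q k dvd (x'-x)*(y''-y')" using r2 by (simp add: w v)
  then have "Nq q k dvd z''-z-x*(y''-y)" using r1 r2 unfolding h w v e3
    by (simp only: rel.simps) (meson dvd_add)
  moreover have "Mq q k dvd x''-x" "Nq q k dvd y''-y" using r1 r2 unfolding h w v e1 e2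
    by (simp_all only: rel.simps) (meson dvd_add)+
  ultimately show ?thesis unfolding h w v by simp
qed

lemma rel_mono: "j \<le> k \<Longrightarrow> rel q k h w \<Longrightarrow> rel q j h w"
  by (cases h; cases w) (auto intro: dvd_trans[OF Mq_dvd] dvd_trans[OF Nq_dvd])

lemma rel_left: "rel q k (hmult g h) (hmult g w) = rel q k h w"
proof -
  obtain a b c where g: "g = (a,b,c)" by (cases g) auto
  obtain x y z where h: "h = (x,y,z)" by (cases h) auto
  obtain x' y' z' where w: "w = (x',y',z')" by (cases w) auto
  have e3: "c + z' + a * y' - (c + z + a * y) - (a + x) * (y' - y) = z'-z-x*(y'-y)"
    by (simp add: algebra_simps)
  have e1: "a + x' - (a + x) = x' - x" and e2: "b + y' - (b + y) = y' - y" by simp_all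
  show ?thesis by (simp only: g h w hmult.simps rel.simps e1 e2 e3)
qed

lemma cs_self: "h \<in> cs q k h" by (simp add: cs_char rel_refl)

lemma cs_eq: "cs q k h = cs q k h' \<longleftrightarrow> rel q k h h'"
  by (metis cs_char cs_self equalityI rel_sym rel_trans subsetI)

lemma lcos_cs: "l_coset heisG g (cs q k h) = cs q k (hmult g h)"
proof -
  have key: "w \<in> hmult g ` cs q k h \<longleftrightarrow> rel q k (hmult g h) w" for w
  proof
    assume "w \<in> hmult g ` cs q k h"
    then show "rel q k (hmult g h) w" by (auto simp: rel_left cs_char)
  next
    assume "rel q k (hmult g h) w"
    then have "rel q k h (hmult (hinv g) w)" by (metis rel_left hmult_hinv1)
    then show "w \<in> hmult g ` cs q k h" by (metis hmult_hinv1 image_eqI cs_char)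
  qed
  show ?thesis unfolding lcos_image using key cs_char by blast
qed

lemma cosets_eq: "cosets q k = range (cs q k)"
  by (auto simp: cosets_def cs_def heisG_def)




lemma Mq_gt: assumes "\<forall>i. prime (q i)" shows "int k < Mq q k"
proof (induction k)
  case 0 have "2 \<le> q 0" using assms prime_ge_2_nat by blast
  then show ?case by (simp add: Mq_def)
next
  case (Suc k)
  have "2 \<le> q (Suc k)" using assms prime_ge_2_nat by blast
  then have "Mq q k * 2 \<le> Mq q k * int (q (Suc k))" using Suc by simp
  then show ?case using Suc unfolding Mq_Suc by linarith
qed

lemma Mq_all_dvd: assumes "\<forall>i. prime (q i)" and "\<forall>j. Mq q j dvd a" shows "a = 0"
proof (rule ccontr)
  assume "a \<noteq> 0"
  then have "\<bar>Mq q (nat \<bar>a\<bar>)\<bar> \<le> \<bar>a\<bar>" using assms(2) dvd_imp_le_int by blast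
  moreover have "int (nat \<bar>a\<bar>) < Mq q (nat \<bar>a\<bar>)" using Mq_gt[OF assms(1)] by blast
  ultimately show False by simp
qed

lemma Nq_all_dvd: assumes "\<forall>i. prime (q i)" and "\<forall>j. Nq q j dvd a" shows "a = 0"
proof (rule Mq_all_dvd[OF assms(1)], rule allI)
  fix j show "Mq q j dvd a" using dvd_trans[OF Mq_dvd_Nq] assms(2) by blast
qed

lemma Mq_pos: assumes "\<forall>i. prime (q i)" shows "0 < Mq q k"
  using Mq_gt[OF assms, of k] by simp

lemma Gam_subgroup: "subgroup (Gam q k) heisG"
proof (rule group.subgroupI[OF heis_group])
  show "Gam q k \<subseteq> carrier heisG" by (simp add: heisG_def)
  show "Gam q k \<noteq> {}" using Gam_mem[of 0 0 0 q k] by auto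
next
  fix a assume "a \<in> Gam q k"
  moreover obtain x y z where a: "a = (x,y,z)" by (cases a) auto
  ultimately have h: "Mq q k dvd x" "Nq q k dvd y" "Nq q k dvd z" by (auto simp: Gam_mem)
  have "Nq q k dvd x*y - z" by (intro dvd_diff dvd_mult h(2,3))
  then show "inv\<^bsub>heisG\<^esub> a \<in> Gam q k" using h unfolding a heis_inv Gam_mem by simp
next
  fix a b assume "a \<in> Gam q k" "b \<in> Gam q k"
  moreover obtain x y z where a: "a = (x,y,z)" by (cases a) auto
  moreover obtain x' y' z' where b: "b = (x',y',z')" by (cases b) auto
  ultimately have h: "Mq q k dvd x" "Nq q k dvd y" "Nq q k dvd z" "Mq q k dvd x'" "Nq q k dvd y'" "Nq q k dvd z'"
    by (auto simp: Gam_mem)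
  have "Nq q k dvd z + z' + x*y'" by (intro dvd_add dvd_mult h)
  moreover have "Mq q k dvd x + x'" "Nq q k dvd y + y'" by (intro dvd_add h)+
  ultimately show "a \<otimes>\<^bsub>heisG\<^esub> b \<in> Gam q k"
    by (simp only: a b heisG_def Gam_mem monoid.simps hmult.simps)
qed

lemma Gam_mono: "Gam q (Suc k) \<subseteq> Gam q k"
proof
  fix a assume "a \<in> Gam q (Suc k)"
  moreover obtain x y z where a: "a = (x,y,z)" by (cases a) auto
  ultimately have h: "Mq q (Suc k) dvd x" "Nq q (Suc k) dvd y" "Nq q (Suc k) dvd z" by (auto simp: Gam_mem)
  have s: "k \<le> Suc k" by simp
  have "Mq q k dvd x" "Nq q k dvd y" "Nq q k dvd z"
    by (rule dvd_trans[OF Mq_dvd[OF s] h(1)], rule dvd_trans[OF Nq_dvd[OF s] h(2)], rule dvd_trans[OF Nq_dvd[OF s] h(3)])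
  then show "a \<in> Gam q k" by (simp add: a Gam_mem)
qed

lemma modeq_int: "0 \<le> (a::int) \<Longrightarrow> a < M \<Longrightarrow> 0 \<le> b \<Longrightarrow> b < M \<Longrightarrow> M dvd b - a \<Longrightarrow> a = b"
  by (metis mod_eq_dvd_iff mod_pos_pos_trivial)

lemma cosets_bij: assumes "\<forall>i. prime (q i)"
  shows "bij_betw (cs q k) ({0..<Mq q k} \<times> {0..<Nq q k} \<times> {0..<Nq q k}) (cosets q k)"
proof -
  let ?M = "Mq q k" and ?N = "Nq q k"
  have M0: "0 < ?M" using Mq_pos[OF assms] .
  have N0: "0 < ?N" using M0 by (simp add: Nq_eq)
  show ?thesis unfolding bij_betw_def cosets_eq
  proof
    show "inj_on (cs q k) ({0..<?M} \<times> {0..<?N} \<times> {0..<?N})"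
    proof (rule inj_onI)
      fix h w assume h: "h \<in> {0..<?M} \<times> {0..<?N} \<times> {0..<?N}" and w: "w \<in> {0..<?M} \<times> {0..<?N} \<times> {0..<?N}"
        and e: "cs q k h = cs q k w"
      obtain x y z where hh: "h = (x,y,z)" by (cases h) auto
      obtain x' y' z' where ww: "w = (x',y',z')" by (cases w) auto
      have r: "rel q k h w" using e cs_eq by blast
      have "x = x'" using r h w modeq_int[of x ?M x'] by (simp add: hh ww)
      moreover have "y = y'" using r h w modeq_int[of y ?N y'] by (simp add: hh ww)
      moreover have "z = z'" using r h w modeq_int[of z ?N z'] \<open>y = y'\<close> by (simp add: hh ww)
      ultimately show "h = w" by (simp add: hh ww)
    qed
  next
    show "cs q k ` ({0..<?M} \<times> {0..<?N} \<times> {0..<?N}) = range (cs q k)"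
    proof
      show "range (cs q k) \<subseteq> cs q k ` ({0..<?M} \<times> {0..<?N} \<times> {0..<?N})"
      proof
        fix C assume "C \<in> range (cs q k)"
        then obtain x y z where C: "C = cs q k (x,y,z)" by auto
        let ?w = "(x mod ?M, y mod ?N, (z + x*(y mod ?N - y)) mod ?N)"
        have gen: "\<And>t K. (K::int) dvd t mod K - t" by (simp add: mod_eq_dvd_iff[symmetric])
        have e: "(z + x*(y mod ?N - y)) mod ?N - z - x*(y mod ?N - y) = (z + x*(y mod ?N - y)) mod ?N - (z + x*(y mod ?N - y))"
          by (simp only: diff_diff_eq)
        have "rel q k (x,y,z) ?w"
          unfolding rel.simps e by (intro conjI gen)
        then have "C = cs q k ?w" using C cs_eq by blast
        moreover have "?w \<in> {0..<?M} \<times> {0..<?N} \<times> {0..<?N}" using M0 N0 by simp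
        ultimately show "C \<in> cs q k ` ({0..<?M} \<times> {0..<?N} \<times> {0..<?N})" by blast
      qed
    qed auto
  qed
qed

lemma Mq_nat: "Mq q k = int (\<Prod>i\<le>k. q i)"
  by (simp add: Mq_def)

lemma idx_eq: assumes "\<forall>i. prime (q i)" shows "idx q k = (\<Prod>i\<le>k. q i) ^ 5"
proof -
  have "idx q k = card ({0..<Mq q k} \<times> {0..<Nq q k} \<times> {0..<Nq q k})"
    unfolding idx_def using bij_betw_same_card[OF cosets_bij[OF assms]] by simp
  also have "\<dots> = nat (Mq q k) * (nat (Nq q k) * nat (Nq q k))"
    by (simp add: card_cartesian_product)
  also have "\<dots> = (\<Prod>i\<le>k. q i) ^ 5"
  proof -
    define m where "m = (\<Prod>i\<le>k. q i)"
    have a: "Mq q k = int m" by (simp add: m_def Mq_nat)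
    have b: "Nq q k = int (m^2)" by (simp add: Nq_eq a)
    have c: "(5::nat) = 1 + (2+2)" by simp
    have d: "m * (m^2 * m^2) = m^5" by (simp only: c power_add power_one_right)
    show ?thesis unfolding a b nat_int m_def[symmetric] d ..
  qed
  finally show ?thesis .
qed

lemma cosets_finite: assumes "\<forall>i. prime (q i)" shows "finite (cosets q k)"
proof -
  have fin: "finite ({0..<Mq q k} \<times> {0..<Nq q k} \<times> {0..<Nq q k})"
    by (intro finite_cartesian_product finite_atLeastLessThan_int)
  have e: "finite ({0..<Mq q k} \<times> {0..<Nq q k} \<times> {0..<Nq q k}) = finite (cosets q k)"
    by (rule bij_betw_finite[OF cosets_bij[OF assms]])
  show ?thesis using fin unfolding e .
qed

lemma mult_prod: fixes q :: "nat \<Rightarrow> nat" and p :: nat assumes "\<forall>i. prime (q i)" "prime p"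
  shows "multiplicity p (\<Prod>i\<le>k. q i) = (\<Sum>i\<le>k. multiplicity p (q i))"
proof -
  have 1: "prime_elem p" using assms(2) by simp
  have 2: "0 \<notin> q ` {..k}" using assms(1) by (metis image_iff not_prime_0)
  have 3: "finite {..k}" by simp
  show ?thesis by (rule prime_elem_multiplicity_prod_distrib[OF 1 2 3])
qed



lemma mult_q: assumes "prime (p::nat)" "prime (r::nat)"
  shows "multiplicity p r = (if p = r then 1 else 0)"
proof (cases "p = r")
  case True then show ?thesis using assms by (simp add: multiplicity_self)
next
  case False then show ?thesis using prime_multiplicity_other[OF assms False] by simp
qed

lemma mult_idx: fixes q :: "nat \<Rightarrow> nat" and p :: nat
  assumes "\<forall>i. prime (q i)" "prime p"
  shows "multiplicity p (idx q k) = 5 * (\<Sum>i\<le>k. (if p = q i then 1 else 0))"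
proof -
  have q0: "\<forall>i. q i \<noteq> 0" using assms(1) by (metis not_prime_0)
  have nz: "(\<Prod>i\<le>k. q i) \<noteq> 0" using q0 by simp
  have "multiplicity p (idx q k) = 5 * multiplicity p (\<Prod>i\<le>k. q i)"
    unfolding idx_eq[OF assms(1)]
    by (rule prime_elem_multiplicity_power_distrib) (use assms(2) nz in simp_all)
  also have "\<dots> = 5 * (\<Sum>i\<le>k. multiplicity p (q i))" by (simp only: mult_prod[OF assms])
  also have "\<dots> = 5 * (\<Sum>i\<le>k. (if p = q i then 1 else 0))"
    using mult_q[OF assms(2)] assms(1) by simp
  finally show ?thesis .
qed

lemma chi_q: fixes q :: "nat \<Rightarrow> nat"
  assumes "inj q" "\<forall>i. prime (q i)"
  shows "steinitz_chi q (q j) = (SUP k. enat (5 * (if j \<le> k then 1 else 0)))"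
proof -
  have "(\<Sum>i\<le>k. (if q j = q i then 1 else 0)) = (if j \<le> k then 1 else (0::nat))" for k
  proof -
    have "(\<Sum>i\<le>k. (if q j = q i then 1 else 0)) = (\<Sum>i\<le>k. (if j = i then 1 else (0::nat)))"
      using assms(1) by (intro sum.cong) (auto dest: injD)
    also have "\<dots> = (if j \<le> k then 1 else 0)" by simp
    finally show ?thesis .
  qed
  then show ?thesis unfolding steinitz_chi_def using mult_idx[OF assms(2) assms(2)[rule_format, of j]]
    by simp
qed

lemma chi_other: fixes q :: "nat \<Rightarrow> nat"
  assumes "\<forall>i. prime (q i)" "prime p" "p \<notin> range q"
  shows "steinitz_chi q p = 0"
proof -
  have "multiplicity p (idx q k) = 0" for k
  proof -
    have ne: "\<forall>i. p \<noteq> q i" using assms(3) by blast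
    have "(\<Sum>i\<le>k. (if p = q i then 1 else 0)) = (0::nat)" using ne by simp
    then show ?thesis unfolding mult_idx[OF assms(1,2)] by simp
  qed
  then show ?thesis unfolding steinitz_chi_def by (simp add: zero_enat_def)
qed

lemma chi_q_pos: fixes q :: "nat \<Rightarrow> nat"
  assumes "inj q" "\<forall>i. prime (q i)"
  shows "steinitz_chi q (q j) > 0" and "steinitz_chi q (q j) < \<infinity>"
proof -
  have "enat 5 \<le> (SUP k. enat (5 * (if j \<le> k then 1 else 0)))"
    by (rule SUP_upper2[of j]) simp_all
  then show "steinitz_chi q (q j) > 0" unfolding chi_q[OF assms]
    by (rule less_le_trans[rotated]) (simp add: zero_enat_def)
  have "(SUP k. enat (5 * (if j \<le> k then 1 else 0))) \<le> enat 5"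
    by (rule SUP_least) simp
  then show "steinitz_chi q (q j) < \<infinity>" unfolding chi_q[OF assms]
    by (rule le_less_trans) simp
qed

lemma spectrum: fixes q :: "nat \<Rightarrow> nat"
  assumes "inj q" "\<forall>i. prime (q i)"
  shows "prime_spectrum q = range q"
proof
  show "prime_spectrum q \<subseteq> range q"
  proof
    fix p assume "p \<in> prime_spectrum q"
    then have p: "prime p" "steinitz_chi q p > 0" unfolding prime_spectrum_def by simp_all
    show "p \<in> range q"
    proof (rule ccontr)
      assume "p \<notin> range q"
      then have "steinitz_chi q p = 0" by (rule chi_other[OF assms(2) p(1)])
      then show False using p(2) by simp
    qed
  qed
  show "range q \<subseteq> prime_spectrum q"
  proof
    fix p assume "p \<in> range q"
    then obtain j where j: "p = q j" by blast
    show "p \<in> prime_spectrum q" unfolding prime_spectrum_def j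
      using chi_q_pos(1)[OF assms, of j] assms(2) by simp
  qed
qed



lemma topspace_X: "topspace (Xtop q) = Xinf q"
proof -
  have "Xinf q \<subseteq> (\<Pi>\<^sub>E k\<in>UNIV. cosets q k)"
    by (auto simp: Xinf_def PiE_iff)
  then show ?thesis unfolding Xtop_def topspace_subtopology topspace_product_topology
    topspace_discrete_topology by blast
qed

lemma Xinf_mono: assumes "x \<in> Xinf q" "j \<le> n" shows "x n \<subseteq> x j"
  using assms(2)
proof (induction n)
  case 0 then show ?case by simp
next
  case (Suc n)
  have s: "x (Suc n) \<subseteq> x n" using assms(1) by (simp add: Xinf_def)
  show ?case
  proof (cases "j \<le> n")
    case True show ?thesis by (rule subset_trans[OF s Suc.IH[OF True]])
  next
    case False then have "j = Suc n" using Suc.prems by simp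
    then show ?thesis by simp
  qed
qed

lemma Xinf_cs: assumes "x \<in> Xinf q" shows "\<exists>h. x j = cs q j h"
  using assms unfolding Xinf_def cosets_eq by blast

lemma Xinf_rep: assumes "x \<in> Xinf q" "j \<le> n" "h \<in> x n" shows "x j = cs q j h"
proof -
  have hj: "h \<in> x j" using Xinf_mono[OF assms(1,2)] assms(3) by blast
  obtain h0 where h0: "x j = cs q j h0" using Xinf_cs[OF assms(1)] by blast
  have "rel q j h0 h" using hj h0 cs_char by metis
  then show ?thesis using h0 cs_eq by metis
qed

definition orb :: "(nat \<Rightarrow> nat) \<Rightarrow> heis \<Rightarrow> nat \<Rightarrow> heis set" where
  "orb q h = (\<lambda>j. cs q j h)"

lemma orb_Xinf: "orb q h \<in> Xinf q"
  unfolding Xinf_def orb_def cosets_eq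
proof (intro CollectI conjI allI)
  fix k
  show "cs q k h \<in> range (cs q k)" by simp
  show "cs q (Suc k) h \<subseteq> cs q k h"
  proof
    fix w assume "w \<in> cs q (Suc k) h"
    then have "rel q (Suc k) h w" by (simp add: cs_char)
    then have "rel q k h w" by (rule rel_mono[rotated]) simp
    then show "w \<in> cs q k h" by (simp add: cs_char)
  qed
qed

lemma Phi_orb: "Phi g (orb q h) = orb q (hmult g h)"
  unfolding Phi_def orb_def by (simp add: lcos_cs)

lemma lcos_one: "l_coset heisG (0,0,0) S = S"
  unfolding lcos_image by simp

lemma Phi_one: "Phi (0,0,0) x = x"
  unfolding Phi_def lcos_one by simp

lemma open_nbhd: assumes "openin (Xtop q) U" "x0 \<in> U"
  shows "\<exists>n. \<forall>y\<in>Xinf q. y n = x0 n \<longrightarrow> y \<in> U"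
proof -
  obtain V where V: "openin (product_topology (\<lambda>k. discrete_topology (cosets q k)) UNIV) V"
    and UV: "U = V \<inter> Xinf q"
    using assms(1) unfolding Xtop_def openin_subtopology by blast
  have x0V: "x0 \<in> V" and x0X: "x0 \<in> Xinf q" using assms(2) UV by auto
  obtain W where Wfin: "finite {i \<in> UNIV. W i \<noteq> topspace (discrete_topology (cosets q i))}"
    and x0W: "x0 \<in> Pi\<^sub>E UNIV W" and WV: "Pi\<^sub>E UNIV W \<subseteq> V"
    using V x0V unfolding openin_product_topology_alt by blast
  obtain n where n: "{i \<in> UNIV. W i \<noteq> topspace (discrete_topology (cosets q i))} \<subseteq> {..<n}"
    using finite_nat_bounded[OF Wfin] by blast
  have "y \<in> U" if y: "y \<in> Xinf q" "y n = x0 n" for y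
  proof -
    have "y \<in> Pi\<^sub>E UNIV W"
    proof (unfold PiE_iff, intro conjI ballI)
      fix i :: nat
      show "y i \<in> W i"
      proof (cases "W i = cosets q i")
        case True then show ?thesis using y(1) by (simp add: Xinf_def)
      next
        case False
        then have "i < n" using n by auto
        obtain h where h: "x0 n = cs q n h" using Xinf_cs[OF x0X] by blast
        have hx: "h \<in> x0 n" and hy: "h \<in> y n" using h y(2) cs_self by metis+
        have "y i = cs q i h" by (rule Xinf_rep[OF y(1)]) (use \<open>i < n\<close> hy in auto)
        moreover have "x0 i = cs q i h" by (rule Xinf_rep[OF x0X]) (use \<open>i < n\<close> hx in auto)
        ultimately have "y i = x0 i" by simp
        then show ?thesis using x0W by (simp add: PiE_iff)
      qed
    qed simp
    then show ?thesis using WV UV y(1) by blast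
  qed
  then show ?thesis by blast
qed

lemma dense_orb: assumes "openin (Xtop q) U" "U \<noteq> {}"
  shows "\<exists>h. orb q h \<in> U"
proof -
  obtain x0 where x0: "x0 \<in> U" using assms(2) by blast
  have x0X: "x0 \<in> Xinf q" using openin_subset[OF assms(1)] x0 topspace_X by blast
  obtain n where n: "\<forall>y\<in>Xinf q. y n = x0 n \<longrightarrow> y \<in> U" using open_nbhd[OF assms(1) x0] by blast
  obtain h where h: "x0 n = cs q n h" using Xinf_cs[OF x0X] by blast
  have "orb q h n = x0 n" using h by (simp add: orb_def)
  then have "orb q h \<in> U" using n orb_Xinf by blast
  then show ?thesis by blast
qed

lemma top_free: assumes "\<forall>i. prime (q i)" shows "topologically_free (Xtop q) (range Phi)"
  unfolding topologically_free_def
proof (intro ballI impI notI)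
  fix f assume "f \<in> range Phi"
  then obtain g where g: "f = Phi g" by blast
  assume "\<exists>x\<in>topspace (Xtop q). f x \<noteq> x"
  then obtain x1 where x1: "x1 \<in> Xinf q" "f x1 \<noteq> x1" using topspace_X by blast
  assume "\<exists>U. openin (Xtop q) U \<and> U \<noteq> {} \<and> (\<forall>x\<in>U. f x = x)"
  then obtain U where U: "openin (Xtop q) U" "U \<noteq> {}" "\<forall>x\<in>U. f x = x" by blast
  obtain h where h: "orb q h \<in> U" using dense_orb[OF U(1,2)] by blast
  have "orb q (hmult g h) = orb q h" using U(3) h g Phi_orb by metis
  then have r: "rel q j h (hmult g h)" for j
    using cs_eq[of q j] unfolding orb_def by (metis rel_sym)
  obtain a b c where gg: "g = (a,b,c)" by (cases g) auto
  obtain x y z where hh: "h = (x,y,z)" by (cases h) auto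
  have e: "c + z + a * y - z - x * (b + y - y) = c + a*y - x*b" by (simp add: algebra_simps)
  have r': "Mq q j dvd a \<and> Nq q j dvd b \<and> Nq q j dvd c + a*y - x*b" for j
    using r[of j] unfolding gg hh hmult.simps rel.simps e by simp
  have a0: "a = 0" using Mq_all_dvd[OF assms] r' by blast
  have b0: "b = 0" using Nq_all_dvd[OF assms] r' by blast
  have c0: "c = 0" using Nq_all_dvd[OF assms, of c] r' a0 b0 by simp
  have "f x1 = x1" using g gg a0 b0 c0 Phi_one by simp
  then show False using x1(2) by simp
qed



definition FA :: "(nat \<Rightarrow> int) \<Rightarrow> (nat \<Rightarrow> heis set) \<Rightarrow> (nat \<Rightarrow> heis set)" where
  "FA A x = (\<lambda>j. l_coset heisG (A j, 0, 0) (x j))"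

definition compat :: "(nat \<Rightarrow> nat) \<Rightarrow> (nat \<Rightarrow> int) \<Rightarrow> bool" where
  "compat q A \<longleftrightarrow> (\<forall>j. Nq q j dvd A (Suc j) - A j)"

lemma relG: "rel q j (x,y,z) (hmult (a,0,0) (x,y,z)) \<longleftrightarrow> Mq q j dvd a \<and> Nq q j dvd a*y"
  by simp

lemma stepG: assumes "Nq q j dvd A' - A"
  shows "rel q j (hmult (A,0,0) h) (hmult (A',0,0) h)"
proof -
  obtain x y z where hh: "h = (x,y,z)" by (cases h) auto
  have d1: "Mq q j dvd A' - A" by (rule dvd_trans[OF Mq_dvd_Nq assms])
  have d3: "Nq q j dvd (A' - A) * y" using assms by (rule dvd_mult2)
  have e1: "A' + x - (A + x) = A' - A" by simp
  have e3: "0 + z + A' * y - (0 + z + A * y) - (A + x) * (0 + y - (0 + y)) = (A' - A) * y"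
    by (simp add: algebra_simps)
  show ?thesis unfolding hh hmult.simps rel.simps e1 e3 using d1 d3 by simp
qed

lemma chainG: assumes "compat q A" "j \<le> n" shows "Nq q j dvd A n - A j"
  using assms(2)
proof (induction n)
  case 0 then show ?case by simp
next
  case (Suc n)
  show ?case
  proof (cases "j \<le> n")
    case True
    have a: "Nq q j dvd A n - A j" by (rule Suc.IH[OF True])
    have b: "Nq q j dvd A (Suc n) - A n"
      by (rule dvd_trans[OF Nq_dvd[OF True]]) (use assms(1) compat_def in blast)
    have "A (Suc n) - A j = (A (Suc n) - A n) + (A n - A j)" by simp
    then show ?thesis using dvd_add[OF b a] by simp
  next
    case False then have "j = Suc n" using Suc.prems by simp
    then show ?thesis by simp
  qed
qed

lemma FA_level: "x j = cs q j h \<Longrightarrow> FA A x j = cs q j (hmult (A j,0,0) h)"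
  by (simp add: FA_def lcos_cs)

lemma FA_Xinf: assumes "compat q A" "x \<in> Xinf q" shows "FA A x \<in> Xinf q"
  unfolding Xinf_def
proof (intro CollectI conjI allI)
  fix k
  obtain h where h: "x k = cs q k h" using Xinf_cs[OF assms(2)] by blast
  show "FA A x k \<in> cosets q k" unfolding FA_level[where x=x and j=k, OF h] cosets_eq by simp
next
  fix j
  obtain h where h: "x (Suc j) = cs q (Suc j) h" using Xinf_cs[OF assms(2)] by blast
  have hin: "h \<in> x (Suc j)" using h cs_self by metis
  have hj: "x j = cs q j h" by (rule Xinf_rep[OF assms(2) _ hin]) simp
  have st: "rel q j (hmult (A j,0,0) h) (hmult (A (Suc j),0,0) h)"
    by (rule stepG) (use assms(1) compat_def in blast)
  show "FA A x (Suc j) \<subseteq> FA A x j"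
    unfolding FA_level[where x=x and j="Suc j", OF h] FA_level[where x=x and j=j, OF hj]
  proof
    fix w assume "w \<in> cs q (Suc j) (hmult (A (Suc j), 0, 0) h)"
    then have "rel q (Suc j) (hmult (A (Suc j), 0, 0) h) w" by (simp add: cs_char)
    then have "rel q j (hmult (A (Suc j), 0, 0) h) w" by (rule rel_mono[rotated]) simp
    then have "rel q j (hmult (A j, 0, 0) h) w" by (rule rel_trans[OF st])
    then show "w \<in> cs q j (hmult (A j, 0, 0) h)" by (simp add: cs_char)
  qed
qed

lemma cont_into_X: "continuous_map X (Xtop q) f \<longleftrightarrow>
   continuous_map X (product_topology (\<lambda>k. discrete_topology (cosets q k)) UNIV) f \<and> f \<in> topspace X \<rightarrow> Xinf q"
  unfolding Xtop_def by (rule continuous_map_in_subtopology)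

lemma FA_cont: assumes "compat q A" shows "continuous_map (Xtop q) (Xtop q) (FA A)"
  unfolding cont_into_X
proof
  show "continuous_map (Xtop q) (product_topology (\<lambda>k. discrete_topology (cosets q k)) UNIV) (FA A)"
    unfolding continuous_map_componentwise_UNIV
  proof
    fix k
    have proj: "continuous_map (Xtop q) (discrete_topology (cosets q k)) (\<lambda>x. x k)"
      unfolding Xtop_def by (rule continuous_map_from_subtopology[OF continuous_map_product_projection]) simp
    have g: "continuous_map (discrete_topology (cosets q k)) (discrete_topology (cosets q k))
        (\<lambda>C. l_coset heisG (A k,0,0) C)"
      by (auto simp: cosets_eq lcos_cs Pi_def)
    have "continuous_map (Xtop q) (discrete_topology (cosets q k)) ((\<lambda>C. l_coset heisG (A k,0,0) C) \<circ> (\<lambda>x. x k))"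
      by (rule continuous_map_compose[OF proj g])
    then show "continuous_map (Xtop q) (discrete_topology (cosets q k)) (\<lambda>x. FA A x k)"
      by (simp add: FA_def o_def)
  qed
  show "FA A \<in> topspace (Xtop q) \<rightarrow> Xinf q"
    using FA_Xinf[OF assms] topspace_X by blast
qed

lemma hmult_neg: "hmult (-a,0,0) (hmult (a,0,0) w) = w"
  by (cases w) simp

lemma FA_inv: "FA (\<lambda>j. - A j) (FA A x) = x"
proof
  fix j
  have "hmult (- A j, 0, 0) ` hmult (A j, 0, 0) ` x j = x j"
    by (simp add: image_image hmult_neg)
  then show "FA (\<lambda>j. - A j) (FA A x) j = x j" by (simp add: FA_def lcos_image)
qed

lemma compat_neg: "compat q A \<Longrightarrow> compat q (\<lambda>j. - A j)"
  unfolding compat_def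
proof (intro allI)
  fix j assume a: "\<forall>j. Nq q j dvd A (Suc j) - A j"
  have e: "- A (Suc j) - - A j = - (A (Suc j) - A j)" by simp
  show "Nq q j dvd - A (Suc j) - - A j" unfolding e dvd_minus_iff using a by blast
qed

lemma FA_homeo: assumes "compat q A" shows "homeomorphic_map (Xtop q) (Xtop q) (FA A)"
proof (rule homeomorphic_maps_imp_map)
  show "homeomorphic_maps (Xtop q) (Xtop q) (FA A) (FA (\<lambda>j. - A j))"
    unfolding homeomorphic_maps_def
    using FA_cont[OF assms] FA_cont[OF compat_neg[OF assms]] FA_inv[of A] FA_inv[of "\<lambda>j. - A j"]
    by simp
qed

lemma FA_approx: assumes "compat q A" "\<epsilon> > 0"
  shows "\<exists>g. \<forall>x\<in>Xinf q. xdist (FA A x) (Phi g x) < \<epsilon>"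
proof -
  obtain n where n: "(1/2::real)^n < \<epsilon>" using real_arch_pow_inv[OF assms(2), of "1/2"] by auto
  have agree: "FA A x j = Phi (A n,0,0) x j" if x: "x \<in> Xinf q" and jn: "j \<le> n" for x j
  proof -
    obtain h where h: "x j = cs q j h" using Xinf_cs[OF x] by blast
    have "rel q j (hmult (A j,0,0) h) (hmult (A n,0,0) h)"
      by (rule stepG[OF chainG[OF assms(1) jn]])
    then have "cs q j (hmult (A j,0,0) h) = cs q j (hmult (A n,0,0) h)" by (simp add: cs_eq)
    then show ?thesis unfolding FA_level[where x=x and j=j, OF h] Phi_def h lcos_cs by simp
  qed
  have "xdist (FA A x) (Phi (A n,0,0) x) < \<epsilon>" if x: "x \<in> Xinf q" for x
  proof (cases "FA A x = Phi (A n,0,0) x")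
    case True then show ?thesis using assms(2) by (simp add: xdist_def)
  next
    case False
    then obtain l where l: "FA A x l \<noteq> Phi (A n,0,0) x l" by (auto simp: fun_eq_iff)
    define L where "L = (LEAST l. FA A x l \<noteq> Phi (A n,0,0) x l)"
    have "FA A x L \<noteq> Phi (A n,0,0) x L" unfolding L_def by (rule LeastI[where P="\<lambda>l. FA A x l \<noteq> Phi (A n,0,0) x l", OF l])
    then have "\<not> L \<le> n" using agree[OF x] by blast
    then have le: "(1/2::real)^L \<le> (1/2)^n" by (intro power_decreasing) simp_all
    have "xdist (FA A x) (Phi (A n,0,0) x) = (1/2)^L" using False by (simp add: xdist_def L_def)
    then show ?thesis using le_less_trans[OF le n] by (simp only:)
  qed
  then show ?thesis by blast
qed

lemma FA_env: assumes "compat q A" shows "FA A \<in> enveloping q"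
  unfolding enveloping_def using FA_homeo[OF assms] FA_approx[OF assms] by blast

lemma FA_fix: assumes x: "x \<in> Xinf q" and xm: "x m = Gam q m"
  and d: "\<And>j. Mq q j dvd A j \<and> Nq q j dvd A j * Nq q m"
  shows "FA A x = x"
proof
  fix j
  let ?n = "max j m"
  obtain h0 where h0: "x ?n = cs q ?n h0" using Xinf_cs[OF x] by blast
  have hin: "h0 \<in> x ?n" using h0 cs_self by metis
  have hj: "x j = cs q j h0" by (rule Xinf_rep[OF x _ hin]) simp
  have "h0 \<in> x m" using Xinf_mono[OF x, of m ?n] hin by auto
  then have hG: "h0 \<in> Gam q m" using xm by simp
  obtain a b c where hh: "h0 = (a,b,c)" by (cases h0) auto
  have "Nq q m dvd b" using hG by (simp add: hh Gam_mem)
  then have "A j * Nq q m dvd A j * b" by simp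
  then have "Nq q j dvd A j * b" by (rule dvd_trans[OF conjunct2[OF d[of j]]])
  then have "rel q j h0 (hmult (A j,0,0) h0)" unfolding hh relG using d[of j] by simp
  then have "cs q j (hmult (A j,0,0) h0) = cs q j h0" using cs_eq rel_sym by metis
  then show "FA A x j = x j" unfolding FA_level[where x=x and j=j, OF hj] hj .
qed



lemma notdvd_prod: fixes q :: "nat \<Rightarrow> nat" assumes "inj q" "\<forall>i. prime (q i)" "m < s"
  shows "\<not> q s dvd (\<Prod>i\<le>m. q i)"
proof
  assume "q s dvd (\<Prod>i\<le>m. q i)"
  then have "\<exists>i\<in>{..m}. q s dvd q i"
    using prime_dvd_prod_iff[of "{..m}" "q s" q] assms(2) by simp
  then obtain i where i: "i \<le> m" "q s dvd q i" by auto
  have "q s = q i" using primes_dvd_imp_eq[OF _ _ i(2)] assms(2) by blast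
  then have "s = i" by (rule injD[OF assms(1)])
  then show False using i(1) assms(3) by simp
qed

lemma prod_split: fixes m j :: nat shows "m \<le> j \<Longrightarrow> (\<Prod>i\<le>j. f i) = (\<Prod>i\<le>m. f i) * (\<Prod>i\<in>{m<..j}. (f i :: int))"
proof -
  assume "m \<le> j"
  then have e: "{..j} = {..m} \<union> {m<..j}" by auto
  have d: "{..m} \<inter> {m<..j} = {}" by auto
  show ?thesis unfolding e by (rule prod.union_disjoint) (simp_all add: d)
qed

definition Pq :: "(nat \<Rightarrow> nat) \<Rightarrow> nat \<Rightarrow> nat \<Rightarrow> int" where
  "Pq q m j = (\<Prod>i\<in>{m<..j}. int (q i) ^ 2)"

definition Tq :: "(nat \<Rightarrow> nat) \<Rightarrow> nat \<Rightarrow> nat" where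
  "Tq q m = totient (nat (Nq q m))"

definition Aq :: "(nat \<Rightarrow> nat) \<Rightarrow> nat \<Rightarrow> nat \<Rightarrow> int" where
  "Aq q m j = Mq q m * Pq q m j ^ Tq q m"

lemma Nq_split: "m \<le> j \<Longrightarrow> Nq q j = Nq q m * Pq q m j"
  unfolding Nq_def Pq_def by (rule prod_split)

lemma Mq_split: "m \<le> j \<Longrightarrow> Mq q j = Mq q m * (\<Prod>i\<in>{m<..j}. int (q i))"
  unfolding Mq_def by (rule prod_split)

lemma Tq_pos: assumes "\<forall>i. prime (q i)" shows "0 < Tq q m"
proof -
  have "0 < Nq q m" using Mq_pos[OF assms, of m] by (simp add: Nq_eq)
  then show ?thesis unfolding Tq_def by simp
qed

lemma Aq_fix: assumes "\<forall>i. prime (q i)"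
  shows "Mq q j dvd Aq q m j \<and> Nq q j dvd Aq q m j * Nq q m"
proof (cases "j \<le> m")
  case True
  have "Mq q j dvd Mq q m" by (rule Mq_dvd[OF True])
  then have 1: "Mq q j dvd Aq q m j" unfolding Aq_def by (rule dvd_mult2)
  have "Nq q j dvd Nq q m" by (rule Nq_dvd[OF True])
  then have 2: "Nq q j dvd Aq q m j * Nq q m" by (rule dvd_mult)
  show ?thesis using 1 2 by blast
next
  case False
  then have mj: "m \<le> j" by simp
  have T: "0 < Tq q m" by (rule Tq_pos[OF assms])
  have R: "(\<Prod>i\<in>{m<..j}. int (q i)) dvd Pq q m j"
    unfolding Pq_def by (rule prod_dvd_prod) (simp add: power2_eq_square)
  have P: "Pq q m j dvd Pq q m j ^ Tq q m" using T by simp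
  have 1: "Mq q j dvd Aq q m j" unfolding Mq_split[OF mj] Aq_def
    by (rule mult_dvd_mono[OF dvd_refl dvd_trans[OF R P]])
  have e: "Aq q m j * Nq q m = Mq q m * (Nq q m * Pq q m j ^ Tq q m)" by (simp add: Aq_def)
  have "Nq q m * Pq q m j dvd Nq q m * Pq q m j ^ Tq q m" by (rule mult_dvd_mono[OF dvd_refl P])
  then have 2: "Nq q j dvd Aq q m j * Nq q m" unfolding Nq_split[OF mj] e by (rule dvd_mult)
  show ?thesis using 1 2 by blast
qed

lemma euler_q: assumes "inj q" "\<forall>i. prime (q i)" "m < s"
  shows "Nq q m dvd (int (q s) ^ 2) ^ Tq q m - 1"
proof -
  define nm where "nm = (\<Prod>i\<le>m. q i) ^ 2"
  have N: "Nq q m = int nm" by (simp add: nm_def Nq_eq Mq_nat)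
  have T: "Tq q m = totient nm" by (simp add: Tq_def N)
  have "coprime (q s) (\<Prod>i\<le>m. q i)"
    by (rule prime_imp_coprime) (use assms notdvd_prod in blast)+
  then have "coprime (q s ^ 2) nm" by (simp add: nm_def)
  then have "[(q s ^ 2) ^ totient nm = 1] (mod nm)" by (rule euler_theorem)
  then have "[int ((q s ^ 2) ^ totient nm) = int 1] (mod int nm)" by (simp only: cong_int_iff)
  then have "int nm dvd int ((q s ^ 2) ^ totient nm) - int 1" by (simp only: cong_iff_dvd_diff)
  then show ?thesis by (simp add: N T)
qed

lemma Aq_compat: assumes "inj q" "\<forall>i. prime (q i)" shows "compat q (Aq q m)"
  unfolding compat_def
proof
  fix j
  show "Nq q j dvd Aq q m (Suc j) - Aq q m j"
  proof (cases "j < m")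
    case True
    then have "{m<..Suc j} = {}" "{m<..j} = {}" by auto
    then have "Pq q m (Suc j) = Pq q m j" by (simp add: Pq_def)
    then show ?thesis by (simp add: Aq_def)
  next
    case False
    then have mj: "m \<le> j" by simp
    let ?Q = "int (q (Suc j)) ^ 2" and ?P = "Pq q m j" and ?T = "Tq q m"
    have s: "{m<..Suc j} = insert (Suc j) {m<..j}" using mj by auto
    have PS: "Pq q m (Suc j) = ?Q * ?P" unfolding Pq_def s by (subst prod.insert) simp_all
    have e: "Aq q m (Suc j) - Aq q m j = Mq q m * ((?Q ^ ?T - 1) * ?P ^ ?T)"
      unfolding Aq_def PS by (simp add: power_mult_distrib algebra_simps)
    have eu: "Nq q m dvd ?Q ^ ?T - 1" using euler_q[OF assms] mj by simp
    have P: "?P dvd ?P ^ ?T" using Tq_pos[OF assms(2)] by simp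
    have "Nq q m * ?P dvd (?Q ^ ?T - 1) * ?P ^ ?T" by (rule mult_dvd_mono[OF eu P])
    then show ?thesis unfolding e Nq_split[OF mj] by (rule dvd_mult)
  qed
qed

lemma Aq_m: "Aq q m m = Mq q m"
  by (simp add: Aq_def Pq_def)

lemma key_notdvd: assumes "inj q" "\<forall>i. prime (q i)"
  shows "\<not> Nq q (Suc k) dvd Mq q (Suc k) * Nq q k"
proof
  let ?Q = "int (q (Suc k))"
  assume a: "Nq q (Suc k) dvd Mq q (Suc k) * Nq q k"
  have e1: "Nq q (Suc k) = (Nq q k * ?Q) * ?Q" by (simp add: Nq_eq Mq_Suc power2_eq_square algebra_simps)
  have e2: "Mq q (Suc k) * Nq q k = (Nq q k * ?Q) * Mq q k" by (simp add: Mq_Suc algebra_simps)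
  have nz: "Nq q k * ?Q \<noteq> 0" using Mq_pos[OF assms(2), of k] assms(2) by (simp add: Nq_eq prime_gt_0_nat)
  have "?Q dvd Mq q k" using a nz unfolding e1 e2 by simp
  then have "int (q (Suc k)) dvd int (\<Prod>i\<le>k. q i)" by (simp only: Mq_nat)
  then have "q (Suc k) dvd (\<Prod>i\<le>k. q i)" by (simp only: int_dvd_int_iff)
  then show False using notdvd_prod[OF assms, of k "Suc k"] by simp
qed



lemma Gam_cs: "Gam q k = cs q k (0,0,0)"
  by (simp add: cs_def lcos_one)

lemma cyl_open: assumes "C \<in> cosets q k"
  shows "openin (Xtop q) {x \<in> topspace (Xtop q). x k \<in> {C}}"
proof (rule openin_continuous_map_preimage)
  show "continuous_map (Xtop q) (discrete_topology (cosets q k)) (\<lambda>x. x k)"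
    unfolding Xtop_def by (rule continuous_map_from_subtopology[OF continuous_map_product_projection]) simp
  show "openin (discrete_topology (cosets q k)) {C}" using assms by simp
qed

lemma FA_zero: "FA (\<lambda>_. 0) x = x"
  by (simp add: FA_def lcos_one)

lemma compat_zero: "compat q (\<lambda>_. 0)"
  by (simp add: compat_def)

lemma xdist_bound: assumes x: "x \<in> Xinf q" and y: "y \<in> Xinf q"
  and xk: "x k = Gam q k" and yk: "y k = Gam q k"
  shows "xdist x y \<le> (1/2)^k"
proof (cases "x = y")
  case True then show ?thesis by (simp add: xdist_def)
next
  case False
  then obtain l where l: "x l \<noteq> y l" by (auto simp: fun_eq_iff)
  define L where "L = (LEAST l. x l \<noteq> y l)"
  have L: "x L \<noteq> y L" unfolding L_def by (rule LeastI[where P="\<lambda>l. x l \<noteq> y l", OF l])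
  have "\<not> L \<le> k"
  proof
    assume Lk: "L \<le> k"
    have g0: "(0,0,0) \<in> Gam q k" by (simp add: Gam_cs cs_self)
    have 0: "(0,0,0) \<in> x k" "(0,0,0) \<in> y k" using g0 xk yk by simp_all
    have "x L = cs q L (0,0,0)" by (rule Xinf_rep[OF x Lk 0(1)])
    moreover have "y L = cs q L (0,0,0)" by (rule Xinf_rep[OF y Lk 0(2)])
    ultimately show False using L by simp
  qed
  then have le: "(1/2::real)^L \<le> (1/2)^k" by (intro power_decreasing) simp_all
  have "xdist x y = (1/2)^L" using False by (simp add: xdist_def L_def)
  then show ?thesis using le by (simp only:)
qed

lemma wild_main: assumes "inj q" "\<forall>i. prime (q i)" shows "wild q"
  unfolding wild_def locally_quasi_analytic_def
proof
  assume "\<exists>\<epsilon>>0. \<forall>U V. openin (Xtop q) U \<and> U \<noteq> {} \<and> xdiam U < \<epsilon> \<and> openin (Xtop q) V \<and> V \<noteq> {} \<and> V \<subseteq> U \<longrightarrow>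
        (\<forall>g1\<in>enveloping q. \<forall>g2\<in>enveloping q. (\<forall>x\<in>V. g1 x = g2 x) \<longrightarrow> (\<forall>x\<in>U. g1 x = g2 x))"
  then obtain \<epsilon> where ep: "\<epsilon> > 0" and H: "\<forall>U V. openin (Xtop q) U \<and> U \<noteq> {} \<and> xdiam U < \<epsilon> \<and> openin (Xtop q) V \<and> V \<noteq> {} \<and> V \<subseteq> U \<longrightarrow>
        (\<forall>g1\<in>enveloping q. \<forall>g2\<in>enveloping q. (\<forall>x\<in>V. g1 x = g2 x) \<longrightarrow> (\<forall>x\<in>U. g1 x = g2 x))"
    by (elim exE conjE)
  obtain k where k: "(1/2::real)^k < \<epsilon>" using real_arch_pow_inv[OF ep, of "1/2"] by auto
  define m where "m = Suc k"
  define U where "U = {x \<in> topspace (Xtop q). x k \<in> {Gam q k}}"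
  define V where "V = {x \<in> topspace (Xtop q). x m \<in> {Gam q m}}"
  have GamC: "Gam q j \<in> cosets q j" for j unfolding Gam_cs cosets_eq by simp
  have Uo: "openin (Xtop q) U" unfolding U_def by (rule cyl_open[OF GamC])
  have Vo: "openin (Xtop q) V" unfolding V_def by (rule cyl_open[OF GamC])
  have orb0: "orb q (0,0,0) j = Gam q j" for j by (simp add: orb_def Gam_cs)
  have Une: "U \<noteq> {}" unfolding U_def topspace_X using orb_Xinf[of q "(0,0,0)"] orb0 by blast
  have Vne: "V \<noteq> {}" unfolding V_def topspace_X using orb_Xinf[of q "(0,0,0)"] orb0 by blast
  have VU: "V \<subseteq> U"
  proof
    fix x assume "x \<in> V"
    then have x: "x \<in> Xinf q" "x m = Gam q m" unfolding V_def topspace_X by auto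
    have 0: "(0,0,0) \<in> x m" by (simp add: x(2) Gam_cs cs_self)
    have "x k = cs q k (0,0,0)" by (rule Xinf_rep[OF x(1) _ 0]) (simp add: m_def)
    then show "x \<in> U" unfolding U_def topspace_X using x(1) Gam_cs by simp
  qed
  have diam: "xdiam U < \<epsilon>"
  proof -
    let ?S = "{xdist x y | x y. x \<in> U \<and> y \<in> U}"
    have "?S \<noteq> {}" using Une by blast
    moreover have "\<And>d. d \<in> ?S \<Longrightarrow> d \<le> (1/2)^k"
    proof -
      fix d assume "d \<in> ?S"
      then obtain x y where d: "d = xdist x y" "x \<in> U" "y \<in> U" by blast
      then have "x \<in> Xinf q" "y \<in> Xinf q" "x k = Gam q k" "y k = Gam q k"
        unfolding U_def topspace_X by auto
      then show "d \<le> (1/2)^k" unfolding d(1) by (rule xdist_bound)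
    qed
    ultimately have "Sup ?S \<le> (1/2)^k" by (rule cSup_least)
    then show ?thesis unfolding xdiam_def using k by simp
  qed
  have all: "\<forall>g1\<in>enveloping q. \<forall>g2\<in>enveloping q. (\<forall>x\<in>V. g1 x = g2 x) \<longrightarrow> (\<forall>x\<in>U. g1 x = g2 x)"
    by (rule mp[OF spec[OF spec[OF H, of U], of V]]) (intro conjI Uo Une diam Vo Vne VU)
  have e1: "FA (\<lambda>_. 0) \<in> enveloping q" by (rule FA_env[OF compat_zero])
  have e2: "FA (Aq q m) \<in> enveloping q" by (rule FA_env[OF Aq_compat[OF assms]])
  have agree: "\<forall>x\<in>V. FA (\<lambda>_. 0) x = FA (Aq q m) x"
  proof
    fix x assume "x \<in> V"
    then have x: "x \<in> Xinf q" "x m = Gam q m" unfolding V_def topspace_X by auto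
    have "FA (Aq q m) x = x" by (rule FA_fix[OF x Aq_fix[OF assms(2)]])
    then show "FA (\<lambda>_. 0) x = FA (Aq q m) x" by (simp add: FA_zero)
  qed
  have allU: "\<forall>x\<in>U. FA (\<lambda>_. 0) x = FA (Aq q m) x" using all e1 e2 agree by blast
  let ?h = "(0, Nq q k, 0) :: heis"
  define xp where "xp = orb q ?h"
  have "rel q k (0,0,0) ?h" by simp
  then have "rel q k ?h (0,0,0)" by (rule rel_sym)
  then have "cs q k ?h = Gam q k" unfolding Gam_cs by (simp only: cs_eq)
  then have "xp \<in> U" unfolding U_def topspace_X xp_def using orb_Xinf[of q ?h] by (simp add: orb_def)
  then have "FA (\<lambda>_. 0) xp = FA (Aq q m) xp" using allU by blast
  then have eq: "xp = FA (Aq q m) xp" by (simp only: FA_zero)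
  have xpm: "xp m = cs q m ?h" by (simp add: xp_def orb_def)
  have "cs q m ?h = xp m" by (simp only: xpm)
  also have "\<dots> = FA (Aq q m) xp m" using arg_cong[OF eq, of "\<lambda>f. f m"] by simp
  also have "\<dots> = cs q m (hmult (Aq q m m,0,0) ?h)" by (rule FA_level[where x=xp and j=m, OF xpm])
  finally have "cs q m ?h = cs q m (hmult (Aq q m m,0,0) ?h)" .
  then have "rel q m ?h (hmult (Aq q m m,0,0) ?h)" by (simp only: cs_eq)
  then have "Nq q m dvd Aq q m m * Nq q k" by (simp only: relG)
  then have "Nq q (Suc k) dvd Mq q (Suc k) * Nq q k" by (simp add: Aq_m m_def)
  then show False using key_notdvd[OF assms] by blast
qed

theorem mainTheorem9:
  fixes q :: "nat \<Rightarrow> nat"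
  assumes "inj q" and "\<forall>i. prime (q i)"
  shows "(\<forall>k. subgroup (Gam q k) heisG \<and> finite (cosets q k) \<and> Gam q (Suc k) \<subseteq> Gam q k)
    \<and> topologically_free (Xtop q) (range Phi)
    \<and> wild q
    \<and> prime_spectrum q = range q
    \<and> (\<forall>i. steinitz_chi q (q i) < \<infinity>)"
  using Gam_subgroup cosets_finite[OF assms(2)] Gam_mono top_free[OF assms(2)] wild_main[OF assms]
    spectrum[OF assms] chi_q_pos(2)[OF assms] by blast


end
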